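(* For every even integer $s_x\ge 0$, $k^*(s_x,2)=2\,k^*(s_x,0)$.
   Context: For integers $a\le b$, $[a,b]$ denotes $\{a,\dots,b\}$. A planar additive basis for $R=[0,s_x]\times[0,s_y]$ is a set $A$ of points with non-negative integer coordinates with $A+A\supseteq R$ ($A+A$ the vector sumset, summands may coincide). For even $s_x,s_y$, a basis is restricted if $A\subseteq[0,s_x/2]\times[0,s_y/2]$. $k^*(s_x,s_y)$ denotes the minimum cardinality of a restricted planar additive basis for $[0,s_x]\times[0,s_y]$; in particular $k^*(s_x,0)$ is the minimum size of a set $E\subseteq[0,s_x/2]$ of integers with $E+E\supseteq[0,s_x]$. *)

theory Defs
  imports Main
begin

definition sumset2 :: "(nat \<times> nat) set \<Rightarrow> (nat \<times> nat) set" where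
  "sumset2 A = {(fst a + fst b, snd a + snd b) | a b. a \<in> A \<and> b \<in> A}"

definition restricted_basis :: "nat \<Rightarrow> nat \<Rightarrow> (nat \<times> nat) set \<Rightarrow> bool" where
  "restricted_basis sx sy A \<longleftrightarrow>
     A \<subseteq> {0..sx div 2} \<times> {0..sy div 2} \<and>
     {0..sx} \<times> {0..sy} \<subseteq> sumset2 A"

definition kstar :: "nat \<Rightarrow> nat \<Rightarrow> nat" where
  "kstar sx sy = (LEAST k. \<exists>A. restricted_basis sx sy A \<and> card A = k)"

end

theory Submission
  imports Defs
begin

lemma kstar_le: "restricted_basis sx sy A \<Longrightarrow> kstar sx sy \<le> card A"
  unfolding kstar_def by (rule Least_le) blast

lemma kstar_ex: "restricted_basis sx sy A \<Longrightarrow> \<exists>B. restricted_basis sx sy B \<and> card B = kstar sx sy"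
  unfolding kstar_def by (rule LeastI_ex) blast

lemma full_basis: assumes "even sx" "even sy" shows "restricted_basis sx sy ({0..sx div 2} \<times> {0..sy div 2})"
  unfolding restricted_basis_def
proof (intro conjI subsetI)
  fix p assume "p \<in> {0..sx} \<times> {0..sy}"
  then obtain i j where p: "p = (i,j)" "i \<le> sx" "j \<le> sy" by auto
  define a where "a = min i (sx div 2)"
  define b where "b = min j (sy div 2)"
  have "(a,b) \<in> {0..sx div 2} \<times> {0..sy div 2}" "(i-a, j-b) \<in> {0..sx div 2} \<times> {0..sy div 2}"
    using p assms by (auto simp: a_def b_def elim!: evenE)
  moreover have "p = (fst (a,b) + fst (i-a,j-b), snd (a,b) + snd (i-a,j-b))"
    using p by (auto simp: a_def b_def)
  ultimately show "p \<in> sumset2 ({0..sx div 2} \<times> {0..sy div 2})"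
    unfolding sumset2_def by blast
qed auto

theorem mainTheorem3:
  fixes sx :: nat
  assumes "even sx"
  shows "kstar sx 2 = 2 * kstar sx 0"
proof (rule antisym)
  obtain B where B: "restricted_basis sx 0 B" "card B = kstar sx 0"
    using kstar_ex[OF full_basis[OF assms, of 0]] by blast
  have Bsub: "B \<subseteq> {0..sx div 2} \<times> {0}" and Bcov: "{0..sx} \<times> {0} \<subseteq> sumset2 B"
    using B(1) unfolding restricted_basis_def by simp_all
  define E where "E = fst ` B"
  have BE: "B = E \<times> {0::nat}"
  proof
    show "B \<subseteq> E \<times> {0::nat}"
    proof
      fix p assume "p \<in> B"
      then have "snd p = 0" "fst p \<in> E" using Bsub unfolding E_def by auto
      then show "p \<in> E \<times> {0::nat}" by (cases p) simp
    qed
  next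
    show "E \<times> {0::nat} \<subseteq> B"
    proof
      fix p assume "p \<in> E \<times> {0::nat}"
      then obtain q where q: "q \<in> B" "fst p = fst q" "snd p = 0" unfolding E_def by auto
      then have "snd q = 0" using Bsub by auto
      then have "p = q" using q by (simp add: prod_eq_iff)
      then show "p \<in> B" using q by simp
    qed
  qed
  have finB: "finite B" by (rule finite_subset[OF Bsub]) simp
  have finE: "finite E" unfolding E_def using finB by simp
  define A where "A = E \<times> {0,1::nat}"
  have cA: "card A = 2 * card E" unfolding A_def using finE by (simp add: card_cartesian_product)
  have cB: "card B = card E" unfolding BE by (simp add: card_cartesian_product)
  have "restricted_basis sx 2 A"
    unfolding restricted_basis_def
  proof (intro conjI subsetI)
    fix p assume "p \<in> A" show "p \<in> {0..sx div 2} \<times> {0..2 div 2}"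
    proof -
      from \<open>p \<in> A\<close> obtain x y where "p = (x,y)" "x \<in> E" "y \<le> 1" unfolding A_def by auto
      moreover have "x \<le> sx div 2" using \<open>x \<in> E\<close> Bsub unfolding E_def by auto
      ultimately show ?thesis by simp
    qed
  next
    fix p assume "p \<in> {0..sx} \<times> {0..2::nat}"
    then obtain i j where p: "p = (i,j)" "i \<le> sx" "j \<le> 2" by auto
    then have "(i,0) \<in> sumset2 B" using Bcov by auto
    then obtain a b where ab: "a \<in> E" "b \<in> E" "i = a + b"
      unfolding sumset2_def BE by auto
    define c where "c = min j 1"
    have "(a,c) \<in> A" "(b, j - c) \<in> A" using ab p unfolding A_def c_def by auto
    moreover have "p = (fst (a,c) + fst (b,j-c), snd (a,c) + snd (b,j-c))"
      using p ab by (auto simp: c_def)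
    ultimately show "p \<in> sumset2 A" unfolding sumset2_def by blast
  qed
  from kstar_le[OF this] show "kstar sx 2 \<le> 2 * kstar sx 0" using cA cB B(2) by simp
next
  obtain A where A: "restricted_basis sx 2 A" "card A = kstar sx 2"
    using kstar_ex[OF full_basis[OF assms, of 2]] by auto
  have Asub: "A \<subseteq> {0..sx div 2} \<times> {0..1}" and Acov: "{0..sx} \<times> {0..2} \<subseteq> sumset2 A"
    using A(1) unfolding restricted_basis_def by auto
  have finA: "finite A" using Asub finite_subset by blast
  define A0 where "A0 = {p\<in>A. snd p = 0}"
  define A1 where "A1 = {p\<in>A. snd p = 1}"
  define A1' where "A1' = (\<lambda>p. (fst p, 0::nat)) ` A1"
  have AU: "A = A0 \<union> A1" using Asub unfolding A0_def A1_def by force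
  have cA: "card A = card A0 + card A1"
    unfolding AU using finA by (subst card_Un_disjoint) (auto simp: A0_def A1_def)
  have inj: "inj_on (\<lambda>p. (fst p, 0::nat)) A1" unfolding A1_def inj_on_def by (auto simp: prod_eq_iff)
  have cA1: "card A1' = card A1" unfolding A1'_def using inj by (simp add: card_image)
  have b0: "restricted_basis sx 0 A0"
    unfolding restricted_basis_def
  proof (intro conjI subsetI)
    fix p assume "p \<in> A0" then show "p \<in> {0..sx div 2} \<times> {0..0 div 2}"
      using Asub unfolding A0_def by auto
  next
    fix p assume "p \<in> {0..sx} \<times> {0..0::nat}"
    then have "p \<in> sumset2 A" "snd p = 0" using Acov by auto
    then obtain a b where "a \<in> A" "b \<in> A" "p = (fst a + fst b, snd a + snd b)" "snd a + snd b = 0"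
      unfolding sumset2_def by auto
    then have "a \<in> A0" "b \<in> A0" "p = (fst a + fst b, snd a + snd b)" unfolding A0_def by auto
    then show "p \<in> sumset2 A0" unfolding sumset2_def by blast
  qed
  have b1: "restricted_basis sx 0 A1'"
    unfolding restricted_basis_def
  proof (intro conjI subsetI)
    fix p assume "p \<in> A1'" then show "p \<in> {0..sx div 2} \<times> {0..0 div 2}"
      using Asub unfolding A1_def A1'_def by auto
  next
    fix p assume "p \<in> {0..sx} \<times> {0..0::nat}"
    then obtain i where p: "p = (i,0)" "i \<le> sx" by auto
    then have "(i,2) \<in> sumset2 A" using Acov by auto
    then obtain a b where ab: "a \<in> A" "b \<in> A" "i = fst a + fst b" "snd a + snd b = 2"
      unfolding sumset2_def by auto
    have "snd a \<le> 1" "snd b \<le> 1" using ab Asub by auto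
    then have "snd a = 1" "snd b = 1" using ab by auto
    then have "(fst a, 0) \<in> A1'" "(fst b, 0) \<in> A1'" using ab unfolding A1_def A1'_def by force+
    moreover have "p = (fst (fst a, 0::nat) + fst (fst b, 0::nat), snd (fst a, 0::nat) + snd (fst b, 0::nat))"
      using p ab by simp
    ultimately show "p \<in> sumset2 A1'" unfolding sumset2_def by blast
  qed
  show "2 * kstar sx 0 \<le> kstar sx 2"
    using kstar_le[OF b0] kstar_le[OF b1] cA cA1 A(2) by simp
qed

end
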